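(* Let $\Lambda$ be a row-finite, source-free, strongly connected $k$-graph and let $x,y\in\Lambda^\infty$ be such that $\sigma^m(x)=\sigma^n(y)$ for some $m,n\in\mathbb N^k$. Then the representations $\pi_x$ on $\mathcal H_x$ and $\pi_y$ on $\mathcal H_y$ (described in the context) are unitarily equivalent.
   Context: $k$-graph: countable small category $\Lambda$ with degree functor $d:\Lambda\to\mathbb N^k$ with unique factorization; $r,s$ range/source, $\Lambda v=\{\lambda:s(\lambda)=v\}$; row-finite, source-free and strongly connected ($v\Lambda w\ne\emptyset$ for all vertices) as usual. Infinite paths $x:\Omega_k\to\Lambda$ (degree-preserving functors from the $k$-graph $\Omega_k$ of pairs $(p,q)$, $p\le q$ in $\mathbb N^k$), shift $\sigma^m(x)(p,q)=x(p+m,q+m)$. Construction: for $x\in\Lambda^\infty$ write $\mathbf 1=(1,\dots,1)$, $x_i=x((i-1)\mathbf 1,i\mathbf 1)$, $v_i=r(x_i)$, $F_i=\Lambda v_i$; $\mathcal H_x=\varinjlim(\ell^2(F_i),\rho_i)$ with $\rho_i(\xi^i_\lambda)=\xi^{i+1}_{\lambda x_i}$, i.e. for $i\le j$ the basis vectors $\xi^i_\lambda$ and $\xi^j_\mu$ are identified iff $\mu=\lambda x_i\cdots x_{j-1}$, with classes $[\xi^i_\lambda]$. $\pi_x$ is the representation of $C^*(\Lambda)$ on $\mathcal H_x$ given by $\pi_x(t_\lambda)[\xi^i_\mu]=[\xi^i_{\lambda\mu}]$ if $s(\lambda)=r(\mu)$ and $0$ otherwise, where $\{t_\lambda\}$ are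 the Cuntz–Krieger generators of $C^*(\Lambda)$. *)

theory Defs
  imports "HOL-Analysis.Analysis" "HOL-Library.Function_Algebras"
begin

text \<open>A small category with object set verts, morphism set arrs, source src,
 range rng, composition comp (comp l m is l m, defined when src l = rng m),
 identities idv, and a degree functor deg into N^k, where N^k is modelled as
 functions 'k => nat for a finite index type 'k (so k = CARD('k)).\<close>

record ('v, 'a, 'k) kgraph =
  verts :: "'v set"
  arrs  :: "'a set"
  src   :: "'a \<Rightarrow> 'v"
  rng   :: "'a \<Rightarrow> 'v"
  comp  :: "'a \<Rightarrow> 'a \<Rightarrow> 'a"
  idv   :: "'v \<Rightarrow> 'a"
  deg   :: "'a \<Rightarrow> 'k \<Rightarrow> nat"

definition is_kgraph :: "('v, 'a, 'k) kgraph \<Rightarrow> bool" where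
  "is_kgraph G \<longleftrightarrow>
     countable (verts G) \<and> countable (arrs G) \<and>
     (\<forall>l\<in>arrs G. src G l \<in> verts G \<and> rng G l \<in> verts G) \<and>
     (\<forall>v\<in>verts G. idv G v \<in> arrs G \<and> src G (idv G v) = v \<and> rng G (idv G v) = v) \<and>
     (\<forall>l\<in>arrs G. \<forall>m\<in>arrs G. src G l = rng G m \<longrightarrow>
        comp G l m \<in> arrs G \<and> src G (comp G l m) = src G m \<and> rng G (comp G l m) = rng G l) \<and>
     (\<forall>l\<in>arrs G. comp G (idv G (rng G l)) l = l \<and> comp G l (idv G (src G l)) = l) \<and>
     (\<forall>l\<in>arrs G. \<forall>m\<in>arrs G. \<forall>n\<in>arrs G. src G l = rng G m \<longrightarrow> src G m = rng G n \<longrightarrow>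
        comp G (comp G l m) n = comp G l (comp G m n)) \<and>
     (\<forall>v\<in>verts G. deg G (idv G v) = 0) \<and>
     (\<forall>l\<in>arrs G. \<forall>m\<in>arrs G. src G l = rng G m \<longrightarrow>
        deg G (comp G l m) = deg G l + deg G m) \<and>
     (\<forall>l\<in>arrs G. \<forall>p q. deg G l = p + q \<longrightarrow>
        (\<exists>!(m, n). m \<in> arrs G \<and> n \<in> arrs G \<and> src G m = rng G n \<and>
                   l = comp G m n \<and> deg G m = p \<and> deg G n = q))"

definition row_finite :: "('v, 'a, 'k) kgraph \<Rightarrow> bool" where
  "row_finite G \<longleftrightarrow>
     (\<forall>v\<in>verts G. \<forall>p. finite {l\<in>arrs G. rng G l = v \<and> deg G l = p})"

definition source_free :: "('v, 'a, 'k) kgraph \<Rightarrow> bool" where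
  "source_free G \<longleftrightarrow>
     (\<forall>v\<in>verts G. \<forall>p. \<exists>l\<in>arrs G. rng G l = v \<and> deg G l = p)"

definition strongly_connected :: "('v, 'a, 'k) kgraph \<Rightarrow> bool" where
  "strongly_connected G \<longleftrightarrow>
     (\<forall>v\<in>verts G. \<forall>w\<in>verts G. \<exists>l\<in>arrs G. rng G l = v \<and> src G l = w)"

text \<open>An infinite path is a degree-preserving functor from Omega_k (morphisms
 (p,q) with p \<le> q, r(p,q)=p, s(p,q)=q, (p,q)(q,r)=(p,r)); we record its values
 x p q on the pairs p \<le> q (values off that set are irrelevant).\<close>

definition infpath :: "('v, 'a, 'k) kgraph \<Rightarrow> (('k \<Rightarrow> nat) \<Rightarrow> ('k \<Rightarrow> nat) \<Rightarrow> 'a) \<Rightarrow> bool" where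
  "infpath G x \<longleftrightarrow>
     (\<forall>p q. p \<le> q \<longrightarrow> x p q \<in> arrs G \<and> deg G (x p q) = q - p) \<and>
     (\<forall>p. x p p = idv G (rng G (x p p))) \<and>
     (\<forall>p q r. p \<le> q \<longrightarrow> q \<le> r \<longrightarrow>
        src G (x p q) = rng G (x q r) \<and> x p r = comp G (x p q) (x q r))"

definition shift :: "('k \<Rightarrow> nat) \<Rightarrow> (('k \<Rightarrow> nat) \<Rightarrow> ('k \<Rightarrow> nat) \<Rightarrow> 'a)
     \<Rightarrow> (('k \<Rightarrow> nat) \<Rightarrow> ('k \<Rightarrow> nat) \<Rightarrow> 'a)" where
  "shift m x = (\<lambda>p q. x (p + m) (q + m))"

text \<open>Basis labels: pairs (i, l) with i \<ge> 1 and l \<in> F_i = Lambda v_i,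
 v_i = r(x_i), x_i = x((i-1)1, i1).\<close>

definition basis_idx :: "('v, 'a, 'k) kgraph \<Rightarrow> (('k \<Rightarrow> nat) \<Rightarrow> ('k \<Rightarrow> nat) \<Rightarrow> 'a) \<Rightarrow> (nat \<times> 'a) set" where
  "basis_idx G x = {(i, l). 1 \<le> i \<and> l \<in> arrs G \<and>
       src G l = rng G (x (\<lambda>_. i - 1) (\<lambda>_. i))}"

text \<open>(i,l) ~ (j,m) for i \<le> j iff m = l x_i ... x_{j-1} = l x((i-1)1,(j-1)1).\<close>

definition ident_rel :: "('v, 'a, 'k) kgraph \<Rightarrow> (('k \<Rightarrow> nat) \<Rightarrow> ('k \<Rightarrow> nat) \<Rightarrow> 'a) \<Rightarrow> ((nat \<times> 'a) \<times> (nat \<times> 'a)) set" where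
  "ident_rel G x = {((i, l), (j, m)).
      (i, l) \<in> basis_idx G x \<and> (j, m) \<in> basis_idx G x \<and>
      ((i \<le> j \<and> m = comp G l (x (\<lambda>_. i - 1) (\<lambda>_. j - 1))) \<or>
       (j \<le> i \<and> l = comp G m (x (\<lambda>_. j - 1) (\<lambda>_. i - 1))))}"

definition Hbasis :: "('v, 'a, 'k) kgraph \<Rightarrow> (('k \<Rightarrow> nat) \<Rightarrow> ('k \<Rightarrow> nat) \<Rightarrow> 'a) \<Rightarrow> (nat \<times> 'a) set set" where
  "Hbasis G x = basis_idx G x // ident_rel G x"

text \<open>l^2 over an index set, as functions vanishing off the set.\<close>

definition l2 :: "'b set \<Rightarrow> ('b \<Rightarrow> complex) set" where
  "l2 S = {f. (\<forall>b. b \<notin> S \<longrightarrow> f b = 0) \<and> (\<lambda>b. (cmod (f b))\<^sup>2) summable_on S}"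

definition l2norm :: "'b set \<Rightarrow> ('b \<Rightarrow> complex) \<Rightarrow> real" where
  "l2norm S f = sqrt (infsum (\<lambda>b. (cmod (f b))\<^sup>2) S)"

definition unitary_between :: "'b set \<Rightarrow> 'c set \<Rightarrow> (('b \<Rightarrow> complex) \<Rightarrow> ('c \<Rightarrow> complex)) \<Rightarrow> bool" where
  "unitary_between S T U \<longleftrightarrow>
     (\<forall>f\<in>l2 S. U f \<in> l2 T) \<and>
     (\<forall>g\<in>l2 T. \<exists>f\<in>l2 S. U f = g) \<and>
     (\<forall>f\<in>l2 S. \<forall>g\<in>l2 S. U (f + g) = U f + U g) \<and>
     (\<forall>f\<in>l2 S. \<forall>c. U (\<lambda>b. c * f b) = (\<lambda>b. c * U f b)) \<and>
     (\<forall>f\<in>l2 S. l2norm T (U f) = l2norm S f)"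

text \<open>pi_x(t_l): [xi^i_m] \<mapsto> [xi^i_{l m}] if s(l) = r(m), 0 otherwise, extended
 to l^2 by linearity and continuity: coefficient of the image at a class c' is the
 coefficient at the (unique) class c mapped to c'.\<close>

definition maps_to :: "('v, 'a, 'k) kgraph \<Rightarrow> (('k \<Rightarrow> nat) \<Rightarrow> ('k \<Rightarrow> nat) \<Rightarrow> 'a) \<Rightarrow> 'a
     \<Rightarrow> (nat \<times> 'a) set \<Rightarrow> (nat \<times> 'a) set \<Rightarrow> bool" where
  "maps_to G x l c c' \<longleftrightarrow> c \<in> Hbasis G x \<and> c' \<in> Hbasis G x \<and>
     (\<exists>i m. (i, m) \<in> c \<and> src G l = rng G m \<and> (i, comp G l m) \<in> c')"

definition pi_rep :: "('v, 'a, 'k) kgraph \<Rightarrow> (('k \<Rightarrow> nat) \<Rightarrow> ('k \<Rightarrow> nat) \<Rightarrow> 'a) \<Rightarrow> 'a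
     \<Rightarrow> ((nat \<times> 'a) set \<Rightarrow> complex) \<Rightarrow> ((nat \<times> 'a) set \<Rightarrow> complex)" where
  "pi_rep G x l f = (\<lambda>c'. if \<exists>c. maps_to G x l c c'
                         then f (THE c. maps_to G x l c c') else 0)"

end

theory Submission imports Defs begin

locale kg = fixes G :: "('v, 'a, 'k) kgraph" assumes kg: "is_kgraph G"
begin

lemmas K = kg[unfolded is_kgraph_def]

lemma comp_props:
  assumes "l \<in> arrs G" "m \<in> arrs G" "src G l = rng G m"
  shows "comp G l m \<in> arrs G" "src G (comp G l m) = src G m" "rng G (comp G l m) = rng G l"
    "deg G (comp G l m) = deg G l + deg G m"
proof -
  have H: "\<forall>l\<in>arrs G. \<forall>m\<in>arrs G. src G l = rng G m \<longrightarrow>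
        comp G l m \<in> arrs G \<and> src G (comp G l m) = src G m \<and> rng G (comp G l m) = rng G l"
    using K[THEN conjunct2, THEN conjunct2, THEN conjunct2, THEN conjunct2, THEN conjunct1] .
  have D: "\<forall>l\<in>arrs G. \<forall>m\<in>arrs G. src G l = rng G m \<longrightarrow>
        deg G (comp G l m) = deg G l + deg G m"
    using K[THEN conjunct2, THEN conjunct2, THEN conjunct2, THEN conjunct2, THEN conjunct2, THEN conjunct2, THEN conjunct2, THEN conjunct2, THEN conjunct1] .
  show "comp G l m \<in> arrs G" "src G (comp G l m) = src G m" "rng G (comp G l m) = rng G l"
    "deg G (comp G l m) = deg G l + deg G m"
    using H D assms by simp_all
qed

lemma assoc:
  assumes "l \<in> arrs G" "m \<in> arrs G" "n \<in> arrs G" "src G l = rng G m" "src G m = rng G n"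
  shows "comp G (comp G l m) n = comp G l (comp G m n)"
  using K[THEN conjunct2, THEN conjunct2, THEN conjunct2, THEN conjunct2, THEN conjunct2, THEN conjunct2, THEN conjunct1] assms by simp

lemma idv_props:
  assumes "v \<in> verts G"
  shows "idv G v \<in> arrs G" "src G (idv G v) = v" "rng G (idv G v) = v"
  using K[THEN conjunct2, THEN conjunct2, THEN conjunct2, THEN conjunct1] assms by simp_all

lemma src_rng_verts: "l \<in> arrs G \<Longrightarrow> src G l \<in> verts G \<and> rng G l \<in> verts G"
  using K[THEN conjunct2, THEN conjunct2, THEN conjunct1] by simp

lemma comp_id_right: "l \<in> arrs G \<Longrightarrow> comp G l (idv G (src G l)) = l"
  using K[THEN conjunct2, THEN conjunct2, THEN conjunct2, THEN conjunct2, THEN conjunct2, THEN conjunct1] by simp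

lemma factor_unique:
  assumes "a \<in> arrs G" "b \<in> arrs G" "c \<in> arrs G" "d \<in> arrs G"
    "src G a = rng G b" "src G c = rng G d" "comp G a b = comp G c d" "deg G a = deg G c"
  shows "a = c \<and> b = d"
proof -
  have da: "deg G (comp G a b) = deg G a + deg G b" using comp_props assms by blast
  have dc: "deg G (comp G c d) = deg G c + deg G d" using comp_props assms by blast
  have "deg G b = deg G d" using da dc assms(7,8) by (metis add_left_cancel)
  have ar: "comp G a b \<in> arrs G" using comp_props assms by blast
  define Q where "Q = (\<lambda>(m, n). m \<in> arrs G \<and> n \<in> arrs G \<and> src G m = rng G n \<and>
                   comp G a b = comp G m n \<and> deg G m = deg G a \<and> deg G n = deg G b)"
  have ex: "\<exists>!y. Q y" unfolding Q_def
    using K[THEN conjunct2, THEN conjunct2, THEN conjunct2, THEN conjunct2, THEN conjunct2, THEN conjunct2, THEN conjunct2, THEN conjunct2, THEN conjunct2, rule_format, OF ar da] .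
  have q1: "Q (a, b)" unfolding Q_def using assms by simp
  have q2: "Q (c, d)" unfolding Q_def using assms \<open>deg G b = deg G d\<close> by simp
  have "(a, b) = (c, d)" using ex q1 q2 by blast
  then show ?thesis by simp
qed

lemma right_cancel:
  assumes "a \<in> arrs G" "b \<in> arrs G" "w \<in> arrs G" "src G a = rng G w" "src G b = rng G w"
    "comp G a w = comp G b w"
  shows "a = b"
proof -
  have "deg G a + deg G w = deg G b + deg G w" using comp_props assms by metis
  then have "deg G a = deg G b" by (metis add_right_cancel)
  then show ?thesis using factor_unique assms by blast
qed

lemma left_cancel:
  assumes "a \<in> arrs G" "b \<in> arrs G" "l \<in> arrs G" "src G l = rng G a" "src G l = rng G b"
    "comp G l a = comp G l b"
  shows "a = b"
  using factor_unique assms by blast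

end

definition P :: "nat \<Rightarrow> 'k \<Rightarrow> nat" where "P i = (\<lambda>_. i)"

lemma P_le[simp]: "P a \<le> P b \<longleftrightarrow> a \<le> b"
  by (simp add: P_def le_fun_def)

locale kpath = kg G for G :: "('v, 'a, 'k) kgraph" +
  fixes x :: "('k \<Rightarrow> nat) \<Rightarrow> ('k \<Rightarrow> nat) \<Rightarrow> 'a"
  assumes ip: "infpath G x"
begin

definition V where "V q = rng G (x q q)"

lemma xarr: "p \<le> q \<Longrightarrow> x p q \<in> arrs G"
  using ip unfolding infpath_def by blast

lemma xdeg: "p \<le> q \<Longrightarrow> deg G (x p q) = q - p"
  using ip unfolding infpath_def by blast

lemma xsplit: "p \<le> q \<Longrightarrow> q \<le> r \<Longrightarrow> x p r = comp G (x p q) (x q r)"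
  using ip unfolding infpath_def by blast

lemma xsrc: "p \<le> q \<Longrightarrow> src G (x p q) = V q"
  using ip unfolding infpath_def V_def by blast

lemma xrng: "p \<le> q \<Longrightarrow> rng G (x p q) = V p"
proof -
  assume a: "p \<le> q"
  have "x p q = comp G (x p p) (x p q)" using xsplit[of p p q] a by simp
  moreover have "rng G (comp G (x p p) (x p q)) = rng G (x p p)"
  proof (rule comp_props(3))
    show "x p p \<in> arrs G" "x p q \<in> arrs G" using xarr a by auto
    show "src G (x p p) = rng G (x p q)" using ip a unfolding infpath_def by blast
  qed
  ultimately show ?thesis unfolding V_def by metis
qed

lemma xid: "x p p = idv G (V p)"
  using ip unfolding infpath_def V_def by blast

lemma V_verts: "V p \<in> verts G"
  using src_rng_verts[OF xarr[of p p]] unfolding V_def by simp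

lemma basis_iff: "(i, l) \<in> basis_idx G x \<longleftrightarrow> 1 \<le> i \<and> l \<in> arrs G \<and> src G l = V (P (i - 1))"
  unfolding basis_idx_def using xrng[of "P (i - 1)" "P i"] by (auto simp: P_def[symmetric])

lemma ident_le:
  assumes "i \<le> j"
  shows "((i, l), (j, m)) \<in> ident_rel G x \<longleftrightarrow>
     (i, l) \<in> basis_idx G x \<and> (j, m) \<in> basis_idx G x \<and> m = comp G l (x (P (i - 1)) (P (j - 1)))"
proof -
  have "m = l" if "i = j" "(i, l) \<in> basis_idx G x" "(j, m) \<in> basis_idx G x"
      "l = comp G m (x (P (i - 1)) (P (i - 1)))"
    using that comp_id_right[of m] basis_iff xid by auto
  moreover have "l = m" if "i = j" "(i, l) \<in> basis_idx G x" "(j, m) \<in> basis_idx G x"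
      "m = comp G l (x (P (i - 1)) (P (i - 1)))"
    using that comp_id_right[of l] basis_iff xid by auto
  ultimately show ?thesis using assms unfolding ident_rel_def P_def
    by (auto simp: P_def[symmetric])
qed

lemma ident_sym: "(a, b) \<in> ident_rel G x \<Longrightarrow> (b, a) \<in> ident_rel G x"
  unfolding ident_rel_def by auto

lemma ident_basis: "(a, b) \<in> ident_rel G x \<Longrightarrow> a \<in> basis_idx G x \<and> b \<in> basis_idx G x"
  unfolding ident_rel_def by auto

definition lift where "lift N a = comp G (snd a) (x (P (fst a - 1)) (P (N - 1)))"

lemma lift_char_le:
  assumes "(i, l) \<in> basis_idx G x" "(j, m) \<in> basis_idx G x" "i \<le> j" "j \<le> N"
  shows "((i, l), (j, m)) \<in> ident_rel G x \<longleftrightarrow> lift N (i, l) = lift N (j, m)"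
proof -
  have l: "l \<in> arrs G" "src G l = V (P (i - 1))" and m: "m \<in> arrs G" "src G m = V (P (j - 1))"
    using assms basis_iff by auto
  have le1: "P (i - 1) \<le> P (j - 1)" and le2: "P (j - 1) \<le> P (N - 1)" using assms by auto
  let ?u = "x (P (i - 1)) (P (j - 1))" and ?w = "x (P (j - 1)) (P (N - 1))"
  have u: "?u \<in> arrs G" "src G ?u = V (P (j - 1))" "rng G ?u = V (P (i - 1))"
    using xarr xsrc xrng le1 by auto
  have w: "?w \<in> arrs G" "src G ?w = V (P (N - 1))" "rng G ?w = V (P (j - 1))"
    using xarr xsrc xrng le2 by auto
  have lu: "comp G l ?u \<in> arrs G" "src G (comp G l ?u) = V (P (j - 1))"
    using comp_props l u by auto
  have "lift N (i, l) = comp G (comp G l ?u) ?w"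
    unfolding lift_def using xsplit[OF le1 le2] assoc[of l ?u ?w] l u w by simp
  moreover have "lift N (j, m) = comp G m ?w" unfolding lift_def by simp
  ultimately have "lift N (i, l) = lift N (j, m) \<longleftrightarrow> m = comp G l ?u"
    using right_cancel[of m "comp G l ?u" ?w] lu m w by metis
  then show ?thesis using ident_le[OF assms(3)] assms by auto
qed

lemma lift_char:
  assumes "a \<in> basis_idx G x" "b \<in> basis_idx G x" "fst a \<le> N" "fst b \<le> N"
  shows "(a, b) \<in> ident_rel G x \<longleftrightarrow> lift N a = lift N b"
proof (cases "fst a \<le> fst b")
  case True
  then show ?thesis using lift_char_le[of "fst a" "snd a" "fst b" "snd b" N] assms by auto
next
  case False
  then show ?thesis using lift_char_le[of "fst b" "snd b" "fst a" "snd a" N] assms ident_sym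
    by (metis le_cases prod.collapse)
qed

lemma ident_equiv: "equiv (basis_idx G x) (ident_rel G x)"
proof (rule equivI)
  show "ident_rel G x \<subseteq> basis_idx G x \<times> basis_idx G x" using ident_basis by auto
  show "refl_on (basis_idx G x) (ident_rel G x)"
  proof (rule refl_onI)
    fix a assume "a \<in> basis_idx G x"
    then show "(a, a) \<in> ident_rel G x" using lift_char[of a a "fst a"] by simp
  qed
  show "sym (ident_rel G x)" using ident_sym by (auto intro: symI)
  show "trans (ident_rel G x)"
  proof (rule transI)
    fix a b c assume ab: "(a, b) \<in> ident_rel G x" and bc: "(b, c) \<in> ident_rel G x"
    define N where "N = max (fst a) (max (fst b) (fst c))"
    have B: "a \<in> basis_idx G x" "b \<in> basis_idx G x" "c \<in> basis_idx G x" using ab bc ident_basis by auto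
    show "(a, c) \<in> ident_rel G x"
      using lift_char[of a b N] lift_char[of b c N] lift_char[of a c N] ab bc B
      unfolding N_def by auto
  qed
qed

end


lemma cls_eq: "equiv A r \<Longrightarrow> X \<in> A//r \<Longrightarrow> a \<in> X \<Longrightarrow> X = r``{a}"
  by (metis equiv_class_eq_iff Image_singleton_iff quotientE)

lemma cls_rel: "equiv A r \<Longrightarrow> X \<in> A//r \<Longrightarrow> a \<in> X \<Longrightarrow> b \<in> X \<Longrightarrow> (a, b) \<in> r"
  by (metis cls_eq Image_singleton_iff)

lemma cls_closed: "equiv A r \<Longrightarrow> X \<in> A//r \<Longrightarrow> a \<in> X \<Longrightarrow> (a, b) \<in> r \<Longrightarrow> b \<in> X"
  by (metis cls_eq Image_singleton_iff)

lemma cls_ne: "equiv A r \<Longrightarrow> X \<in> A//r \<Longrightarrow> \<exists>a. a \<in> X \<and> a \<in> A"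
  by (metis equiv_class_self quotientE)

lemma cls_sub: "equiv A r \<Longrightarrow> X \<in> A//r \<Longrightarrow> X \<subseteq> A"
  by (rule in_quotient_imp_subset)

context kpath
begin

lemma lx:
  assumes "l \<in> arrs G" "src G l = V p" "p \<le> q"
  shows "comp G l (x p q) \<in> arrs G" "src G (comp G l (x p q)) = V q" "rng G (comp G l (x p q)) = rng G l"
  using comp_props[of l "x p q"] assms xarr xsrc xrng by auto

lemma lx_split:
  assumes "l \<in> arrs G" "src G l = V p" "p \<le> q" "q \<le> r"
  shows "comp G l (x p r) = comp G (comp G l (x p q)) (x q r)"
  using assoc[of l "x p q" "x q r"] xsplit[of p q r] assms xarr xsrc xrng by auto

lemma R_rng: "(a, b) \<in> ident_rel G x \<Longrightarrow> rng G (snd a) = rng G (snd b)"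
proof -
  assume ab: "(a, b) \<in> ident_rel G x"
  obtain i l j m where a: "a = (i, l)" and b: "b = (j, m)" by (cases a, cases b)
  show ?thesis
  proof (cases "i \<le> j")
    case True
    then show ?thesis using ab ident_le[OF True] lx[of l "P (i - 1)" "P (j - 1)"] basis_iff a b by auto
  next
    case False
    then have "j \<le> i" by simp
    then show ?thesis using ident_sym[OF ab] ident_le[OF \<open>j \<le> i\<close>] lx[of m "P (j - 1)" "P (i - 1)"] basis_iff a b by auto
  qed
qed

lemma R_left_le:
  assumes "((i, m), (j, m')) \<in> ident_rel G x" "i \<le> j" "l \<in> arrs G" "src G l = rng G m"
  shows "((i, comp G l m), (j, comp G l m')) \<in> ident_rel G x"
proof -
  have m: "m \<in> arrs G" "src G m = V (P (i - 1))" "m' = comp G m (x (P (i - 1)) (P (j - 1)))"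
    "1 \<le> i" "1 \<le> j"
    using assms ident_le basis_iff by auto
  have "comp G l m' = comp G (comp G l m) (x (P (i - 1)) (P (j - 1)))"
    using m assoc[of l m "x (P (i - 1)) (P (j - 1))"] assms xarr xrng by auto
  moreover have "comp G l m \<in> arrs G" "src G (comp G l m) = V (P (i - 1))"
    using comp_props assms m by auto
  moreover have "comp G l m' \<in> arrs G" "src G (comp G l m') = V (P (j - 1))"
    using calculation lx[of "comp G l m" "P (i - 1)" "P (j - 1)"] assms by auto
  ultimately show ?thesis using ident_le[OF assms(2)] basis_iff m by auto
qed

lemma R_left:
  assumes "((i, m), (j, m')) \<in> ident_rel G x" "l \<in> arrs G" "src G l = rng G m"
  shows "((i, comp G l m), (j, comp G l m')) \<in> ident_rel G x"
proof (cases "i \<le> j")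
  case True
  then show ?thesis using R_left_le assms by blast
next
  case False
  have "rng G m = rng G m'" using R_rng assms by force
  then show ?thesis using R_left_le[OF ident_sym[OF assms(1)]] False assms ident_sym by force
qed

lemma R_cancel_le:
  assumes "((i, comp G l m), (j, comp G l m')) \<in> ident_rel G x" "i \<le> j" "l \<in> arrs G"
    "src G l = rng G m" "src G l = rng G m'" "m \<in> arrs G" "m' \<in> arrs G"
  shows "((i, m), (j, m')) \<in> ident_rel G x"
proof -
  have h: "src G (comp G l m) = V (P (i - 1))" "src G (comp G l m') = V (P (j - 1))"
    "comp G l m' = comp G (comp G l m) (x (P (i - 1)) (P (j - 1)))" "1 \<le> i" "1 \<le> j"
    using assms ident_le basis_iff by auto
  have sm: "src G m = V (P (i - 1))" "src G m' = V (P (j - 1))"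
    using h(1) comp_props(2)[of l m] h(2) comp_props(2)[of l m'] assms by simp_all
  have "comp G l m' = comp G l (comp G m (x (P (i - 1)) (P (j - 1))))"
    using h assoc[of l m "x (P (i - 1)) (P (j - 1))"] assms xarr xrng sm by auto
  then have "m' = comp G m (x (P (i - 1)) (P (j - 1)))"
    using left_cancel[of m' "comp G m (x (P (i - 1)) (P (j - 1)))" l] assms lx[of m "P (i - 1)" "P (j - 1)"] sm
    by auto
  then show ?thesis using ident_le[OF assms(2)] basis_iff sm assms h by auto
qed

lemma R_cancel:
  assumes "((i, comp G l m), (j, comp G l m')) \<in> ident_rel G x" "l \<in> arrs G"
    "src G l = rng G m" "src G l = rng G m'" "m \<in> arrs G" "m' \<in> arrs G"
  shows "((i, m), (j, m')) \<in> ident_rel G x"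
proof (cases "i \<le> j")
  case True
  then show ?thesis using R_cancel_le assms by blast
next
  case False
  then show ?thesis using R_cancel_le[OF ident_sym[OF assms(1)]] assms ident_sym by force
qed

lemma maps_to_rep:
  assumes "c \<in> Hbasis G x" "c' \<in> Hbasis G x" "(i, m) \<in> c" "l \<in> arrs G"
  shows "maps_to G x l c c' \<longleftrightarrow> src G l = rng G m \<and> (i, comp G l m) \<in> c'"
proof
  assume "src G l = rng G m \<and> (i, comp G l m) \<in> c'"
  then show "maps_to G x l c c'" using assms unfolding maps_to_def by blast
next
  assume "maps_to G x l c c'"
  then obtain i0 m0 where h: "(i0, m0) \<in> c" "src G l = rng G m0" "(i0, comp G l m0) \<in> c'"
    unfolding maps_to_def by blast
  have r: "((i0, m0), (i, m)) \<in> ident_rel G x"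
    using cls_rel[OF ident_equiv] assms h unfolding Hbasis_def by blast
  then have "rng G m0 = rng G m" using R_rng by force
  moreover have "((i0, comp G l m0), (i, comp G l m)) \<in> ident_rel G x"
    using R_left[OF r assms(4) h(2)] .
  ultimately show "src G l = rng G m \<and> (i, comp G l m) \<in> c'"
    using h cls_closed[OF ident_equiv] assms unfolding Hbasis_def by auto
qed

lemma maps_to_unique:
  assumes "maps_to G x l c1 c'" "maps_to G x l c2 c'" "l \<in> arrs G"
  shows "c1 = c2"
proof -
  obtain i1 m1 where h1: "(i1, m1) \<in> c1" "src G l = rng G m1" "(i1, comp G l m1) \<in> c'"
    and c1: "c1 \<in> Hbasis G x" and c': "c' \<in> Hbasis G x"
    using assms unfolding maps_to_def by blast
  obtain i2 m2 where h2: "(i2, m2) \<in> c2" "src G l = rng G m2" "(i2, comp G l m2) \<in> c'"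
    and c2: "c2 \<in> Hbasis G x"
    using assms unfolding maps_to_def by blast
  have "(i1, m1) \<in> basis_idx G x" "(i2, m2) \<in> basis_idx G x"
    using cls_sub[OF ident_equiv] c1 c2 h1 h2 unfolding Hbasis_def by auto
  then have "m1 \<in> arrs G" "m2 \<in> arrs G" using basis_iff by auto
  then have "((i1, m1), (i2, m2)) \<in> ident_rel G x"
    using R_cancel[of i1 l m1 i2 m2] cls_rel[OF ident_equiv c'[unfolded Hbasis_def] h1(3) h2(3)]
      h1 h2 assms by auto
  then show ?thesis
    using cls_eq[OF ident_equiv] c1 c2 h1 h2 cls_closed[OF ident_equiv] unfolding Hbasis_def
    by metis
qed

end


lemma infpath_shift:
  fixes t :: "'k \<Rightarrow> nat" and x :: "('k \<Rightarrow> nat) \<Rightarrow> ('k \<Rightarrow> nat) \<Rightarrow> 'a"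
  assumes ip: "infpath G x"
  shows "infpath G (shift t x)"
proof -
  have d: "(q + t) - (p + t) = q - p" for p q :: "'k \<Rightarrow> nat"
    by (rule ext) (simp add: plus_fun_def fun_diff_def)
  have m: "p \<le> q \<Longrightarrow> p + t \<le> q + t" for p q :: "'k \<Rightarrow> nat" by (simp add: add_right_mono)
  show ?thesis using ip m unfolding infpath_def shift_def d by (metis d)
qed

locale kshift = kpath G x for G :: "('v, 'a, 'k) kgraph" and x +
  fixes t :: "'k \<Rightarrow> nat" and T :: nat
  assumes tT: "t \<le> P T"
begin

abbreviation "z \<equiv> shift t x"

sublocale Z: kpath G z
  by unfold_locales (rule infpath_shift[OF ip])

lemma zV: "Z.V p = V (p + t)"
  unfolding Z.V_def by (simp add: V_def shift_def)

lemma zval: "z p q = x (p + t) (q + t)" unfolding shift_def by simp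

lemma Pt_le: "P a + t \<le> P (a + T)"
  using tT unfolding le_fun_def P_def plus_fun_def by auto

lemma Pt_mono: "a \<le> b \<Longrightarrow> P a + t \<le> P b + t"
  by (simp add: add_right_mono)

definition Psi :: "nat \<times> 'a \<Rightarrow> nat \<times> 'a" where
  "Psi a = (fst a + T, comp G (snd a) (x (P (fst a - 1) + t) (P (fst a - 1 + T))))"

lemma Psi_basis:
  assumes "(i, l) \<in> basis_idx G z"
  shows "Psi (i, l) \<in> basis_idx G x"
proof -
  have h: "1 \<le> i" "l \<in> arrs G" "src G l = V (P (i - 1) + t)" using assms Z.basis_iff zV by auto
  have "i + T - 1 = i - 1 + T" using h by simp
  then show ?thesis unfolding Psi_def using lx[OF h(2,3) Pt_le] h basis_iff by auto
qed

lemma lift_Psi: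
  assumes "(i, l) \<in> basis_idx G z" "i \<le> N"
  shows "lift (N + T) (Psi (i, l)) = comp G (Z.lift N (i, l)) (x (P (N - 1) + t) (P (N - 1 + T)))"
    "Z.lift N (i, l) \<in> arrs G" "src G (Z.lift N (i, l)) = V (P (N - 1) + t)"
proof -
  have h: "1 \<le> i" "l \<in> arrs G" "src G l = V (P (i - 1) + t)" using assms Z.basis_iff zV by auto
  have e1: "i + T - 1 = i - 1 + T" "N + T - 1 = N - 1 + T" using h assms by auto
  have le1: "P (i - 1) + t \<le> P (i - 1 + T)" using Pt_le .
  have le2: "P (i - 1 + T) \<le> P (N - 1 + T)" using assms by simp
  have le3: "P (i - 1) + t \<le> P (N - 1) + t" using assms Pt_mono by simp
  have le4: "P (N - 1) + t \<le> P (N - 1 + T)" using Pt_le .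
  have "lift (N + T) (Psi (i, l)) = comp G (comp G l (x (P (i - 1) + t) (P (i - 1 + T)))) (x (P (i - 1 + T)) (P (N - 1 + T)))"
    unfolding lift_def Psi_def using e1 by simp
  also have "\<dots> = comp G l (x (P (i - 1) + t) (P (N - 1 + T)))"
    using lx_split[OF h(2,3) le1 le2] by simp
  also have "\<dots> = comp G (comp G l (x (P (i - 1) + t) (P (N - 1) + t))) (x (P (N - 1) + t) (P (N - 1 + T)))"
    using lx_split[OF h(2,3) le3 le4] by simp
  finally show "lift (N + T) (Psi (i, l)) = comp G (Z.lift N (i, l)) (x (P (N - 1) + t) (P (N - 1 + T)))"
    unfolding Z.lift_def zval by simp
  show "Z.lift N (i, l) \<in> arrs G" "src G (Z.lift N (i, l)) = V (P (N - 1) + t)"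
    unfolding Z.lift_def zval using lx[OF h(2,3) le3] by auto
qed

lemma Psi_rel:
  assumes "a \<in> basis_idx G z" "b \<in> basis_idx G z"
  shows "(a, b) \<in> ident_rel G z \<longleftrightarrow> (Psi a, Psi b) \<in> ident_rel G x"
proof -
  obtain i l j m where a: "a = (i, l)" and b: "b = (j, m)" by (cases a, cases b)
  define N where "N = max i j"
  have iN: "i \<le> N" "j \<le> N" unfolding N_def by auto
  have "(a, b) \<in> ident_rel G z \<longleftrightarrow> Z.lift N a = Z.lift N b"
    using Z.lift_char assms iN a b by auto
  also have "\<dots> \<longleftrightarrow> lift (N + T) (Psi a) = lift (N + T) (Psi b)"
    using lift_Psi[of i l N] lift_Psi[of j m N] assms a b iN
      right_cancel[of "Z.lift N a" "Z.lift N b" "x (P (N - 1) + t) (P (N - 1 + T))"]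
      xarr[OF Pt_le] xrng[OF Pt_le] by auto
  also have "\<dots> \<longleftrightarrow> (Psi a, Psi b) \<in> ident_rel G x"
    using lift_char[of "Psi a" "Psi b" "N + T"] Psi_basis assms a b iN unfolding Psi_def by auto
  finally show ?thesis .
qed

lemma Psi_surj:
  assumes "b \<in> basis_idx G x"
  shows "\<exists>a\<in>basis_idx G z. (Psi a, b) \<in> ident_rel G x"
proof -
  obtain i l where b: "b = (i, l)" by (cases b)
  have h: "1 \<le> i" "l \<in> arrs G" "src G l = V (P (i - 1))" using assms b basis_iff by auto
  define mu where "mu = comp G l (x (P (i - 1)) (P (i - 1) + t))"
  have le0: "P (i - 1) \<le> P (i - 1) + t" by (simp add: le_fun_def)
  have mu: "mu \<in> arrs G" "src G mu = V (P (i - 1) + t)" using lx[OF h(2,3) le0] unfolding mu_def by auto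
  then have a: "(i, mu) \<in> basis_idx G z" using Z.basis_iff zV h by auto
  have "Psi (i, mu) = (i + T, comp G l (x (P (i - 1)) (P (i - 1 + T))))"
    unfolding Psi_def mu_def using lx_split[OF h(2,3) le0 Pt_le] by simp
  moreover have "i + T - 1 = i - 1 + T" using h by simp
  ultimately have "(b, Psi (i, mu)) \<in> ident_rel G x"
    using ident_le[of i "i + T" l] Psi_basis[OF a] assms b by auto
  then show ?thesis using a ident_sym by blast
qed

end


definition iso_b where
  "iso_b G x y \<phi> \<longleftrightarrow> bij_betw \<phi> (Hbasis G x) (Hbasis G y) \<and>
     (\<forall>l\<in>arrs G. \<forall>c\<in>Hbasis G x. \<forall>c'\<in>Hbasis G x. maps_to G x l c c' = maps_to G y l (\<phi> c) (\<phi> c'))"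

context kshift
begin

definition phi where "phi c = ident_rel G x `` (Psi ` c)"

lemma phi_cls:
  assumes "a \<in> basis_idx G z"
  shows "phi (ident_rel G z `` {a}) = ident_rel G x `` {Psi a}"
proof
  show "ident_rel G x `` {Psi a} \<subseteq> phi (ident_rel G z `` {a})"
    unfolding phi_def using Z.ident_equiv assms equiv_class_self by fastforce
  show "phi (ident_rel G z `` {a}) \<subseteq> ident_rel G x `` {Psi a}"
  proof
    fix b assume "b \<in> phi (ident_rel G z `` {a})"
    then obtain a' where a': "(a, a') \<in> ident_rel G z" "(Psi a', b) \<in> ident_rel G x"
      unfolding phi_def by blast
    then have "(Psi a, Psi a') \<in> ident_rel G x" using Psi_rel Z.ident_basis assms by blast
    then show "b \<in> ident_rel G x `` {Psi a}" using a' ident_equiv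
      by (meson Image_singleton_iff equivE transD)
  qed
qed

lemma phi_bij: "bij_betw phi (Hbasis G z) (Hbasis G x)"
proof (rule bij_betw_imageI)
  show "inj_on phi (Hbasis G z)"
  proof (rule inj_onI)
    fix c d assume c: "c \<in> Hbasis G z" and d: "d \<in> Hbasis G z" and e: "phi c = phi d"
    obtain a where a: "a \<in> basis_idx G z" "c = ident_rel G z `` {a}"
      using c unfolding Hbasis_def by (auto elim: quotientE)
    obtain b where b: "b \<in> basis_idx G z" "d = ident_rel G z `` {b}"
      using d unfolding Hbasis_def by (auto elim: quotientE)
    have "ident_rel G x `` {Psi a} = ident_rel G x `` {Psi b}" using e a b phi_cls by simp
    then have "(Psi a, Psi b) \<in> ident_rel G x"
      using eq_equiv_class_iff[OF ident_equiv] Psi_basis a b by (metis prod.collapse)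
    then have "(a, b) \<in> ident_rel G z" using Psi_rel a b by blast
    then show "c = d" using a b equiv_class_eq[OF Z.ident_equiv] by simp
  qed
  show "phi ` Hbasis G z = Hbasis G x"
  proof
    show "phi ` Hbasis G z \<subseteq> Hbasis G x"
    proof
      fix c assume "c \<in> phi ` Hbasis G z"
      then obtain a where a: "a \<in> basis_idx G z" "c = phi (ident_rel G z `` {a})"
        unfolding Hbasis_def by (auto elim: quotientE)
      then show "c \<in> Hbasis G x" using phi_cls Psi_basis unfolding Hbasis_def
        by (metis prod.collapse quotientI)
    qed
    show "Hbasis G x \<subseteq> phi ` Hbasis G z"
    proof
      fix c assume "c \<in> Hbasis G x"
      then obtain b where b: "b \<in> basis_idx G x" "c = ident_rel G x `` {b}"
        unfolding Hbasis_def by (auto elim: quotientE)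
      obtain a where a: "a \<in> basis_idx G z" "(Psi a, b) \<in> ident_rel G x" using Psi_surj b by blast
      have "c = phi (ident_rel G z `` {a})" using phi_cls a b equiv_class_eq[OF ident_equiv] by simp
      then show "c \<in> phi ` Hbasis G z" using a unfolding Hbasis_def by (auto intro: quotientI)
    qed
  qed
qed

lemma phi_maps:
  assumes l: "l \<in> arrs G" and c: "c \<in> Hbasis G z" and c': "c' \<in> Hbasis G z"
  shows "maps_to G z l c c' = maps_to G x l (phi c) (phi c')"
proof -
  obtain i mu where a: "(i, mu) \<in> basis_idx G z" "c = ident_rel G z `` {(i, mu)}"
    using c unfolding Hbasis_def by (auto elim: quotientE)
  obtain b where b: "b \<in> basis_idx G z" "c' = ident_rel G z `` {b}"
    using c' unfolding Hbasis_def by (auto elim: quotientE)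
  have h: "1 \<le> i" "mu \<in> arrs G" "src G mu = V (P (i - 1) + t)" using a Z.basis_iff zV by auto
  let ?w = "x (P (i - 1) + t) (P (i - 1 + T))"
  have w: "?w \<in> arrs G" "rng G ?w = V (P (i - 1) + t)" using xarr xrng Pt_le by auto
  have pc: "phi c \<in> Hbasis G x" "phi c' \<in> Hbasis G x" using phi_bij c c' bij_betwE by blast+
  have ain: "(i, mu) \<in> c" using a equiv_class_self[OF Z.ident_equiv] by simp
  have pin: "Psi (i, mu) \<in> phi c" using phi_cls a equiv_class_self[OF ident_equiv] Psi_basis by simp
  have "maps_to G z l c c' \<longleftrightarrow> src G l = rng G mu \<and> (i, comp G l mu) \<in> c'"
    using Z.maps_to_rep[OF c c' ain l] .
  also have "\<dots> \<longleftrightarrow> src G l = rng G mu \<and> Psi (i, comp G l mu) \<in> phi c'"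
  proof -
    have "(i, comp G l mu) \<in> c' \<longleftrightarrow> Psi (i, comp G l mu) \<in> phi c'"
      if s: "src G l = rng G mu"
    proof -
      have lm: "(i, comp G l mu) \<in> basis_idx G z"
        using comp_props[OF l h(2) s] h Z.basis_iff zV by auto
      have "(i, comp G l mu) \<in> c' \<longleftrightarrow> (b, (i, comp G l mu)) \<in> ident_rel G z" using b by simp
      also have "\<dots> \<longleftrightarrow> (Psi b, Psi (i, comp G l mu)) \<in> ident_rel G x" using Psi_rel b lm by blast
      also have "\<dots> \<longleftrightarrow> Psi (i, comp G l mu) \<in> phi c'" using phi_cls b by simp
      finally show ?thesis .
    qed
    then show ?thesis by blast
  qed
  also have "\<dots> \<longleftrightarrow> maps_to G x l (phi c) (phi c')"
  proof -
    have "Psi (i, mu) = (i + T, comp G mu ?w)" unfolding Psi_def by simp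
    moreover have "rng G (comp G mu ?w) = rng G mu" using comp_props h w by auto
    moreover have "src G l = rng G mu \<Longrightarrow> Psi (i, comp G l mu) = (i + T, comp G l (comp G mu ?w))"
      unfolding Psi_def using assoc[OF l h(2) w(1)] h w by simp
    moreover have pin2: "(i + T, comp G mu ?w) \<in> phi c" using pin unfolding Psi_def by simp
    ultimately show ?thesis using maps_to_rep[OF pc pin2 l] by auto
  qed
  finally show ?thesis .
qed

lemma iso_shift: "iso_b G z x phi"
  unfolding iso_b_def using phi_bij phi_maps by blast

end

lemma iso_shift_ex:
  fixes G :: "('v, 'a, 'k::finite) kgraph"
  assumes "is_kgraph G" "infpath G x"
  shows "\<exists>\<phi>. iso_b G (shift t x) x \<phi>"
proof -
  have "t \<le> P (sum t UNIV)" unfolding le_fun_def P_def by (simp add: member_le_sum)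
  then interpret kshift G x t "sum t UNIV" using assms by unfold_locales auto
  show ?thesis using iso_shift by blast
qed

lemma iso_inv:
  assumes "iso_b G x y \<phi>" shows "iso_b G y x (the_inv_into (Hbasis G x) \<phi>)"
proof -
  let ?p = "the_inv_into (Hbasis G x) \<phi>"
  have b: "bij_betw \<phi> (Hbasis G x) (Hbasis G y)" using assms iso_b_def by blast
  have bi: "bij_betw ?p (Hbasis G y) (Hbasis G x)" using bij_betw_the_inv_into[OF b] .
  have "maps_to G y l c c' = maps_to G x l (?p c) (?p c')"
    if "l \<in> arrs G" "c \<in> Hbasis G y" "c' \<in> Hbasis G y" for l c c'
  proof -
    have "?p c \<in> Hbasis G x" "?p c' \<in> Hbasis G x" using bi that bij_betwE by blast+
    moreover have "\<phi> (?p c) = c" "\<phi> (?p c') = c'" using f_the_inv_into_f_bij_betw[OF b] that by auto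
    ultimately show ?thesis using assms that unfolding iso_b_def by metis
  qed
  then show ?thesis using bi unfolding iso_b_def by blast
qed

lemma iso_comp:
  assumes "iso_b G x y \<phi>" "iso_b G y w \<psi>" shows "iso_b G x w (\<psi> \<circ> \<phi>)"
  using assms unfolding iso_b_def
  by (auto intro: bij_betw_trans dest: bij_betwE)

lemma cong_paths:
  fixes x y :: "('k \<Rightarrow> nat) \<Rightarrow> ('k \<Rightarrow> nat) \<Rightarrow> 'a"
  assumes "\<forall>p q. p \<le> q \<longrightarrow> x p q = y p q"
  shows "Hbasis G x = Hbasis G y" "maps_to G x = maps_to G y"
proof -
  have le: "(\<lambda>_::'k. a) \<le> (\<lambda>_. b) \<longleftrightarrow> a \<le> b" for a b :: nat by (simp add: le_fun_def)
  have ex: "x (\<lambda>_. i - 1) (\<lambda>_. i) = y (\<lambda>_. i - 1) (\<lambda>_. i)" for i using assms[rule_format, of "\<lambda>_. i - 1" "\<lambda>_. i"] le by simp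
  have bi: "basis_idx G x = basis_idx G y" unfolding basis_idx_def ex ..
  have "ident_rel G x = ident_rel G y" unfolding ident_rel_def bi
    using assms le by (auto simp del: le_fun_def)
  then show h: "Hbasis G x = Hbasis G y" unfolding Hbasis_def bi by simp
  show "maps_to G x = maps_to G y" unfolding maps_to_def[abs_def] h by simp
qed


lemma iso_unitary:
  assumes iso: "iso_b G x y \<phi>"
    and ux: "\<And>l c1 c2 c'. l \<in> arrs G \<Longrightarrow> maps_to G x l c1 c' \<Longrightarrow> maps_to G x l c2 c' \<Longrightarrow> c1 = c2"
    and uy: "\<And>l c1 c2 c'. l \<in> arrs G \<Longrightarrow> maps_to G y l c1 c' \<Longrightarrow> maps_to G y l c2 c' \<Longrightarrow> c1 = c2"
  shows "\<exists>U. unitary_between (Hbasis G x) (Hbasis G y) U \<and>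
             (\<forall>l\<in>arrs G. \<forall>f\<in>l2 (Hbasis G x). U (pi_rep G x l f) = pi_rep G y l (U f))"
proof -
  define S where "S = Hbasis G x"
  define T where "T = Hbasis G y"
  define \<psi> where "\<psi> = the_inv_into S \<phi>"
  have b: "bij_betw \<phi> S T" using iso unfolding iso_b_def S_def T_def by blast
  have bi: "bij_betw \<psi> T S" unfolding \<psi>_def using bij_betw_the_inv_into[OF b] .
  have pp: "\<phi> (\<psi> c) = c" if "c \<in> T" for c using f_the_inv_into_f_bij_betw[OF b] that \<psi>_def by auto
  have ppi: "\<psi> (\<phi> c) = c" if "c \<in> S" for c using the_inv_into_f_f b that \<psi>_def bij_betw_def by metis
  have mp: "maps_to G x l c c' = maps_to G y l (\<phi> c) (\<phi> c')" if "l \<in> arrs G" "c \<in> S" "c' \<in> S" for l c c'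
    using iso that unfolding iso_b_def S_def by blast
  define U where "U f = (\<lambda>c'. if c' \<in> T then f (\<psi> c') else (0::complex))" for f :: "_ \<Rightarrow> complex"
  have sq: "(\<lambda>c'. (cmod (U f c'))\<^sup>2) summable_on T \<longleftrightarrow> (\<lambda>c. (cmod (f c))\<^sup>2) summable_on S" for f
  proof -
    have "(\<lambda>c'. (cmod (U f c'))\<^sup>2) summable_on T \<longleftrightarrow> (\<lambda>c'. (\<lambda>c. (cmod (f c))\<^sup>2) (\<psi> c')) summable_on T"
      by (rule summable_on_cong) (simp add: U_def)
    also have "\<dots> \<longleftrightarrow> (\<lambda>c. (cmod (f c))\<^sup>2) summable_on S" by (rule summable_on_reindex_bij_betw[OF bi])
    finally show ?thesis .
  qed
  have nm: "infsum (\<lambda>c'. (cmod (U f c'))\<^sup>2) T = infsum (\<lambda>c. (cmod (f c))\<^sup>2) S" for f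
  proof -
    have "infsum (\<lambda>c'. (cmod (U f c'))\<^sup>2) T = infsum (\<lambda>c'. (\<lambda>c. (cmod (f c))\<^sup>2) (\<psi> c')) T"
      by (rule infsum_cong) (simp add: U_def)
    also have "\<dots> = infsum (\<lambda>c. (cmod (f c))\<^sup>2) S" by (rule infsum_reindex_bij_betw[OF bi])
    finally show ?thesis .
  qed
  have unit: "unitary_between S T U"
    unfolding unitary_between_def
  proof (intro conjI ballI allI)
    fix f assume f: "f \<in> l2 S"
    show "U f \<in> l2 T" using f sq unfolding l2_def by (auto simp: U_def)
    show "l2norm T (U f) = l2norm S f" unfolding l2norm_def nm ..
  next
    fix g assume g: "g \<in> l2 T"
    define f where "f c = (if c \<in> S then g (\<phi> c) else 0)" for c
    have "U f = g" using g pp bi unfolding U_def f_def l2_def by (auto simp: bij_betwE)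
    moreover have "f \<in> l2 S" using g sq[of f] \<open>U f = g\<close> unfolding l2_def by (auto simp: f_def)
    ultimately show "\<exists>f\<in>l2 S. U f = g" by blast
  next
    fix f g show "U (f + g) = U f + U g" by (auto simp: U_def)
  next
    fix f c show "U (\<lambda>b. c * f b) = (\<lambda>b. c * U f b)" by (auto simp: U_def)
  qed
  have inter: "U (pi_rep G x l f) = pi_rep G y l (U f)" if l: "l \<in> arrs G" for l f
  proof
    fix c'
    show "U (pi_rep G x l f) c' = pi_rep G y l (U f) c'"
    proof (cases "c' \<in> T")
      case False
      then show ?thesis unfolding U_def pi_rep_def maps_to_def T_def by auto
    next
      case True
      have c'S: "\<psi> c' \<in> S" using bi True bij_betwE by blast
      show ?thesis
      proof (cases "\<exists>c. maps_to G x l c (\<psi> c')")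
        case True2: True
        then obtain c0 where c0: "maps_to G x l c0 (\<psi> c')" by blast
        have c0S: "c0 \<in> S" using c0 unfolding maps_to_def S_def by blast
        have t1: "(THE c. maps_to G x l c (\<psi> c')) = c0"
        proof (rule the_equality)
          show "maps_to G x l c0 (\<psi> c')" by (rule c0)
          fix c assume "maps_to G x l c (\<psi> c')"
          then show "c = c0" by (rule ux[OF l _ c0])
        qed
        have my: "maps_to G y l (\<phi> c0) c'" using mp[OF l c0S c'S] c0 pp True by simp
        have t2: "(THE c. maps_to G y l c c') = \<phi> c0"
        proof (rule the_equality)
          show "maps_to G y l (\<phi> c0) c'" by (rule my)
          fix c assume "maps_to G y l c c'"
          then show "c = \<phi> c0" by (rule uy[OF l _ my])
        qed
        have "\<phi> c0 \<in> T" using b c0S bij_betwE by blast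
        then show ?thesis using True True2 my t1 t2 ppi[OF c0S] unfolding U_def pi_rep_def by auto
      next
        case False2: False
        have "\<not> (\<exists>d. maps_to G y l d c')"
        proof
          assume "\<exists>d. maps_to G y l d c'"
          then obtain d where d: "maps_to G y l d c'" by blast
          then have dT: "d \<in> T" unfolding maps_to_def T_def by blast
          then have "maps_to G x l (\<psi> d) (\<psi> c')" using mp[OF l _ c'S, of "\<psi> d"] bi bij_betwE pp True d
            by metis
          then show False using False2 by blast
        qed
        then show ?thesis using True False2 unfolding U_def pi_rep_def by auto
      qed
    qed
  qed
  show ?thesis using unit inter unfolding S_def T_def by blast
qed

theorem mainTheorem4:
  fixes G :: "('v, 'a, 'k::finite) kgraph"
    and x y :: "('k \<Rightarrow> nat) \<Rightarrow> ('k \<Rightarrow> nat) \<Rightarrow> 'a"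
    and m n :: "'k \<Rightarrow> nat"
  assumes "is_kgraph G" and "row_finite G" and "source_free G" and "strongly_connected G"
    and "infpath G x" and "infpath G y"
    and "\<forall>p q. p \<le> q \<longrightarrow> shift m x p q = shift n y p q"
  shows "\<exists>U. unitary_between (Hbasis G x) (Hbasis G y) U \<and>
             (\<forall>l\<in>arrs G. \<forall>f\<in>l2 (Hbasis G x). U (pi_rep G x l f) = pi_rep G y l (U f))"
proof -
  interpret X: kpath G x using assms by unfold_locales auto
  interpret Y: kpath G y using assms by unfold_locales auto
  obtain \<phi>1 where p1: "iso_b G (shift m x) x \<phi>1" using iso_shift_ex[OF assms(1) assms(5)] by blast
  obtain \<phi>2 where p2: "iso_b G (shift n y) y \<phi>2" using iso_shift_ex[OF assms(1) assms(6)] by blast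
  have p2': "iso_b G (shift m x) y \<phi>2"
    using p2 cong_paths[OF assms(7), of G] unfolding iso_b_def by simp
  have "iso_b G x y (\<phi>2 \<circ> the_inv_into (Hbasis G (shift m x)) \<phi>1)"
    using iso_comp[OF iso_inv[OF p1] p2'] .
  then show ?thesis
  proof (rule iso_unitary)
    fix l c1 c2 c' assume "l \<in> arrs G" "maps_to G x l c1 c'" "maps_to G x l c2 c'"
    then show "c1 = c2" using X.maps_to_unique by blast
  next
    fix l c1 c2 c' assume "l \<in> arrs G" "maps_to G y l c1 c'" "maps_to G y l c2 c'"
    then show "c1 = c2" using Y.maps_to_unique by blast
  qed
qed

end
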